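(* Let $q$ be a prime power, $k,t$ positive integers, and let $\mathcal{P}=\{P_1,\ldots,P_E\}$ be a partition of $\mathbb{F}_q^k$. For every list of distinct vectors $u_1,\ldots,u_m\in\mathbb{F}_q^k$, $$N\big(\mathcal{D}_{\mathcal{P}}(t;u_1,\ldots,u_m)\big)\;\le\; r_{\mathcal{P}}(k,t)\;\le\; N\big(\mathcal{D}_{\mathcal{P}}(t;P_1,\ldots,P_E)\big).$$ Moreover, if $E\ge 2$, then $r_{\mathcal{P}}(k,t)\ge 2t$.
   Context: $d(\cdot,\cdot)$ denotes Hamming distance. A $(\mathcal{P},t)$-encoding with redundancy $r$ is a systematic map $\mathcal{C}:\mathbb{F}_q^k\to\mathbb{F}_q^{k+r}$, $\mathcal{C}(u)=(u,p(u))$ with $p(u)\in\mathbb{F}_q^r$, such that $d(\mathcal{C}(u),\mathcal{C}(v))\ge 2t+1$ whenever $u,v$ lie in different blocks of $\mathcal{P}$. The optimal redundancy $r_{\mathcal{P}}(k,t)$ is the minimum $r$ for which a $(\mathcal{P},t)$-encoding with redundancy $r$ exists. For distinct $u_1,\ldots,u_M\in\mathbb{F}_q^k$, the partition distance requirement matrix $\mathcal{D}_{\mathcal{P}}(t;u_1,\ldots,u_M)$ is the $M\times M$ matrix with $(i,j)$ entry $\max(2t+1-d(u_i,u_j),0)$ if $u_i,u_j$ lie in different blocks of $\mathcal{P}$ and $0$ otherwise. For blocks, $d(P_i,P_j)=\min_{u\in P_i,v\in P_j}d(u,v)$ for $i\ne j$; the partition distance matrix $\mathcal{D}_{\mathcal{P}}(t;P_1,\ldots,P_E)$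 is the $E\times E$ matrix with $(i,j)$ entry $\max(2t+1-d(P_i,P_j),0)$ for $i\neq j$ and $0$ on the diagonal. For a matrix $D\in\mathbb{N}^{M\times M}$, $N(D)$ is the smallest integer $r\ge 0$ such that there exist $z_1,\ldots,z_M\in\mathbb{F}_q^r$ (not necessarily distinct) with $d(z_i,z_j)\ge D_{i,j}$ for all $i\ne j$ (such a list is called a $D$-code). *)

theory Defs
  imports Main
begin

text \<open>Vectors of F_q^n are lists of length n over a finite field type 'a
(so q = CARD('a), automatically a prime power).\<close>

definition vecs :: "nat \<Rightarrow> 'a list set" where
  "vecs n = {u. length u = n}"

definition hdist :: "'a list \<Rightarrow> 'a list \<Rightarrow> nat" where
  "hdist u v = card {i. i < length u \<and> i < length v \<and> u ! i \<noteq> v ! i}"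

definition is_partition :: "'a set \<Rightarrow> 'a set list \<Rightarrow> bool" where
  "is_partition V Ps \<longleftrightarrow> distinct Ps \<and> (\<forall>B\<in>set Ps. B \<noteq> {})
     \<and> (\<forall>i<length Ps. \<forall>j<length Ps. i \<noteq> j \<longrightarrow> Ps ! i \<inter> Ps ! j = {})
     \<and> \<Union>(set Ps) = V"

definition same_block :: "'a set list \<Rightarrow> 'a \<Rightarrow> 'a \<Rightarrow> bool" where
  "same_block Ps u v \<longleftrightarrow> (\<exists>B\<in>set Ps. u \<in> B \<and> v \<in> B)"

text \<open>(P,t)-encoding with redundancy r: C(u) = (u, p u), p u of length r.\<close>
definition is_encoding :: "'a list set list \<Rightarrow> nat \<Rightarrow> nat \<Rightarrow> nat \<Rightarrow> ('a list \<Rightarrow> 'a list) \<Rightarrow> bool" where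
  "is_encoding Ps k t r p \<longleftrightarrow> (\<forall>u\<in>vecs k. length (p u) = r)
     \<and> (\<forall>u\<in>vecs k. \<forall>v\<in>vecs k. \<not> same_block Ps u v \<longrightarrow> hdist (u @ p u) (v @ p v) \<ge> 2*t+1)"

definition r_opt :: "'a list set list \<Rightarrow> nat \<Rightarrow> nat \<Rightarrow> nat" where
  "r_opt Ps k t = (LEAST r. \<exists>p. is_encoding Ps k t r p)"

text \<open>N(D) for an M x M matrix D (indices 0..M-1), codes over the field 'a.\<close>
definition N_req :: "'a itself \<Rightarrow> nat \<Rightarrow> (nat \<Rightarrow> nat \<Rightarrow> nat) \<Rightarrow> nat" where
  "N_req _ M D = (LEAST r. \<exists>z :: nat \<Rightarrow> 'a list. (\<forall>i<M. z i \<in> vecs r)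
      \<and> (\<forall>i<M. \<forall>j<M. i \<noteq> j \<longrightarrow> hdist (z i) (z j) \<ge> D i j))"

text \<open>Partition distance requirement matrix; nat subtraction is max(.,0).\<close>
definition req_matrix :: "'a list set list \<Rightarrow> nat \<Rightarrow> 'a list list \<Rightarrow> nat \<Rightarrow> nat \<Rightarrow> nat" where
  "req_matrix Ps t us i j =
     (if \<not> same_block Ps (us ! i) (us ! j) then (2*t+1) - hdist (us ! i) (us ! j) else 0)"

definition block_dist :: "'a list set \<Rightarrow> 'a list set \<Rightarrow> nat" where
  "block_dist B C = Min {hdist u v | u v. u \<in> B \<and> v \<in> C}"

definition block_matrix :: "'a list set list \<Rightarrow> nat \<Rightarrow> nat \<Rightarrow> nat \<Rightarrow> nat" where
  "block_matrix Ps t i j = (if i \<noteq> j then (2*t+1) - block_dist (Ps ! i) (Ps ! j) else 0)"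

end

theory Submission
  imports Defs
begin

lemma hdist_le_len: "hdist u v \<le> length u"
proof -
  have "{i. i < length u \<and> i < length v \<and> u ! i \<noteq> v ! i} \<subseteq> {..<length u}" by auto
  from card_mono[OF _ this] show ?thesis unfolding hdist_def by simp
qed

lemma hdist_append:
  assumes "length u = length v" "length x = length y"
  shows "hdist (u @ x) (v @ y) = hdist u v + hdist x y"
proof -
  let ?A = "{i. i < length u \<and> i < length v \<and> u ! i \<noteq> v ! i}"
  let ?B = "{i. i < length x \<and> i < length y \<and> x ! i \<noteq> y ! i}"
  have eq: "{i. i < length (u@x) \<and> i < length (v@y) \<and> (u@x) ! i \<noteq> (v@y) ! i}
        = ?A \<union> ((+) (length u)) ` ?B"
  proof (rule set_eqI, rule iffI)
    fix i assume "i \<in> {i. i < length (u@x) \<and> i < length (v@y) \<and> (u@x) ! i \<noteq> (v@y) ! i}"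
    then show "i \<in> ?A \<union> ((+) (length u)) ` ?B"
    proof (cases "i < length u")
      case True then show ?thesis using \<open>i \<in> _\<close> assms by (auto simp: nth_append)
    next
      case False
      then have "i - length u \<in> ?B" "i = length u + (i - length u)"
        using \<open>i \<in> _\<close> assms by (auto simp: nth_append)
      then show ?thesis by blast
    qed
  next
    fix i assume "i \<in> ?A \<union> ((+) (length u)) ` ?B"
    then show "i \<in> {i. i < length (u@x) \<and> i < length (v@y) \<and> (u@x) ! i \<noteq> (v@y) ! i}"
      using assms by (auto simp: nth_append)
  qed
  have "card (?A \<union> ((+) (length u)) ` ?B) = card ?A + card (((+) (length u)) ` ?B)"
    by (rule card_Un_disjoint) auto
  also have "card (((+) (length u)) ` ?B) = card ?B" by (rule card_image) auto
  finally show ?thesis unfolding hdist_def eq by simp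
qed

lemma code_exists:
  assumes "\<And>i j. D i j \<le> c"
  shows "\<exists>z :: nat \<Rightarrow> ('a::field) list. (\<forall>i<M. z i \<in> vecs (M*c))
      \<and> (\<forall>i<M. \<forall>j<M. i \<noteq> j \<longrightarrow> hdist (z i) (z j) \<ge> D i j)"
proof -
  define z :: "nat \<Rightarrow> 'a list" where "z i = map (\<lambda>p. if p div c = i then 1 else 0) [0..<M*c]" for i
  have "hdist (z i) (z j) \<ge> D i j" if "i < M" "j < M" "i \<noteq> j" for i j
  proof (cases "c = 0")
    case True then show ?thesis using assms[of i j] by simp
  next
    case False
    have "i * c + c \<le> M * c" using that(1)
      by (metis add.commute mult_Suc mult_le_mono1 Suc_leI)
    have sub: "{i*c..<i*c+c} \<subseteq> {p. p < length (z i) \<and> p < length (z j) \<and> z i ! p \<noteq> z j ! p}"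
    proof
      fix x assume x: "x \<in> {i*c..<i*c+c}"
      then have "x div c = i" by (intro div_nat_eqI) (auto simp: mult.commute)
      then show "x \<in> {p. p < length (z i) \<and> p < length (z j) \<and> z i ! p \<noteq> z j ! p}"
        using x that \<open>i * c + c \<le> M * c\<close> by (auto simp: z_def)
    qed
    have "c \<le> hdist (z i) (z j)" unfolding hdist_def
      using card_mono[OF _ sub] by simp
    then show ?thesis using assms[of i j] by simp
  qed
  moreover have "z i \<in> vecs (M*c)" for i by (simp add: z_def vecs_def)
  ultimately show ?thesis by blast
qed

lemma same_block_trans:
  assumes "is_partition V Ps" "same_block Ps x y" "same_block Ps y w"
  shows "same_block Ps x w"
proof -
  from assms(2) obtain B1 where B1: "B1 \<in> set Ps" "x \<in> B1" "y \<in> B1" by (auto simp: same_block_def)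
  from assms(3) obtain B2 where B2: "B2 \<in> set Ps" "y \<in> B2" "w \<in> B2" by (auto simp: same_block_def)
  obtain i j where "i < length Ps" "j < length Ps" "B1 = Ps ! i" "B2 = Ps ! j"
    using B1 B2 by (metis in_set_conv_nth)
  then have "B1 = B2" using assms(1) B1 B2 unfolding is_partition_def by blast
  then show ?thesis using B1 B2 by (auto simp: same_block_def)
qed

lemma encoding_from_code:
  fixes Ps :: "'a list set list" and z :: "nat \<Rightarrow> 'a list"
  assumes part: "is_partition (vecs k) Ps"
    and zl: "\<forall>i<length Ps. z i \<in> vecs R"
    and zd: "\<forall>i<length Ps. \<forall>j<length Ps. i \<noteq> j \<longrightarrow> hdist (z i) (z j) \<ge> block_matrix Ps t i j"
  shows "\<exists>p. is_encoding Ps k t R p"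
proof -
  define blk where "blk u = (SOME i. i < length Ps \<and> u \<in> Ps ! i)" for u
  have blk: "blk u < length Ps \<and> u \<in> Ps ! blk u" if "u \<in> vecs k" for u
  proof -
    have "\<exists>i. i < length Ps \<and> u \<in> Ps ! i" using that part unfolding is_partition_def
      by (metis UnionE in_set_conv_nth)
    then show ?thesis unfolding blk_def by (rule someI_ex)
  qed
  define p where "p u = z (blk u)" for u
  have "is_encoding Ps k t R p" unfolding is_encoding_def
  proof (intro conjI ballI impI)
    fix u :: "'a list" assume "u \<in> vecs k" then show "length (p u) = R"
      using blk zl by (auto simp: p_def vecs_def)
  next
    fix u v :: "'a list" assume u: "u \<in> vecs k" and v: "v \<in> vecs k" and ns: "\<not> same_block Ps u v"
    have bu: "blk u < length Ps" "u \<in> Ps ! blk u" and bv: "blk v < length Ps" "v \<in> Ps ! blk v"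
      using blk u v by auto
    have ne: "blk u \<noteq> blk v" using ns bu bv unfolding same_block_def by (metis nth_mem)
    have fin: "finite {hdist a b | a b. a \<in> Ps ! blk u \<and> b \<in> Ps ! blk v}"
    proof (rule finite_subset[of _ "{..k}"])
      show "{hdist a b | a b. a \<in> Ps ! blk u \<and> b \<in> Ps ! blk v} \<subseteq> {..k}"
      proof
        fix x assume "x \<in> {hdist a b | a b. a \<in> Ps ! blk u \<and> b \<in> Ps ! blk v}"
        then obtain a b where "x = hdist a b" "a \<in> Ps ! blk u" by blast
        moreover have "Ps ! blk u \<subseteq> vecs k" using part bu unfolding is_partition_def
          by (metis Union_upper nth_mem)
        ultimately show "x \<in> {..k}" using hdist_le_len[of a b] by (auto simp: vecs_def)
      qed
    qed simp
    have "block_dist (Ps ! blk u) (Ps ! blk v) \<le> hdist u v"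
      unfolding block_dist_def using bu bv by (intro Min_le[OF fin]) blast
    moreover have "block_matrix Ps t (blk u) (blk v) \<le> hdist (z (blk u)) (z (blk v))"
      using zd bu bv ne by blast
    ultimately have "2*t+1 - hdist u v \<le> hdist (p u) (p v)"
      using ne unfolding p_def block_matrix_def by simp
    moreover have "hdist (u @ p u) (v @ p v) = hdist u v + hdist (p u) (p v)"
      using u v bu bv zl by (intro hdist_append) (auto simp: vecs_def p_def)
    ultimately show "2*t+1 \<le> hdist (u @ p u) (v @ p v)" by linarith
  qed
  then show ?thesis by blast
qed

lemma path_nth:
  assumes "length a = k" "length b = k" "j \<le> k" "i < k"
  shows "(take j b @ drop j a) ! i = (if i < j then b ! i else a ! i)"
  using assms by (auto simp: nth_append min_def)

lemma adjacent_diff_blocks: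
  assumes part: "is_partition (vecs k) Ps" and two: "length Ps \<ge> 2"
  shows "\<exists>u\<in>vecs k. \<exists>v\<in>vecs k. \<not> same_block Ps u v \<and> hdist u v \<le> 1"
proof (rule ccontr)
  assume H: "\<not> ?thesis"
  have l0: "0 < length Ps" and l1: "1 < length Ps" using two by auto
  have nee: "\<forall>B\<in>set Ps. B \<noteq> {}" and U: "\<Union>(set Ps) = vecs k"
    using part unfolding is_partition_def by simp_all
  have m0: "Ps ! 0 \<in> set Ps" using l0 by (rule nth_mem)
  have m1: "Ps ! 1 \<in> set Ps" using l1 by (rule nth_mem)
  have ne0: "Ps ! 0 \<noteq> {}" using nee m0 by blast
  have ne1: "Ps ! 1 \<noteq> {}" using nee m1 by blast
  obtain a b where a: "a \<in> Ps ! 0" and b: "b \<in> Ps ! 1" using ne0 ne1 by blast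
  have av: "a \<in> vecs k" using a m0 U by blast
  have bv: "b \<in> vecs k" using b m1 U by blast
  define w where "w j = take j b @ drop j a" for j
  have wv: "w j \<in> vecs k" if "j \<le> k" for j using av bv that by (simp add: w_def vecs_def)
  have "same_block Ps a (w j)" if "j \<le> k" for j
    using that
  proof (induction j)
    case 0
    have "w 0 = a" by (simp add: w_def)
    then show ?case using a m0 unfolding same_block_def by blast
  next
    case (Suc j)
    have "hdist (w j) (w (Suc j)) \<le> 1"
    proof -
      have "{i. i < length (w j) \<and> i < length (w (Suc j)) \<and> w j ! i \<noteq> w (Suc j) ! i} \<subseteq> {j}"
      proof
        fix x assume x: "x \<in> {i. i < length (w j) \<and> i < length (w (Suc j)) \<and> w j ! i \<noteq> w (Suc j) ! i}"
        then have xk: "x < k" using av bv Suc.prems by (simp add: w_def vecs_def)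
        have lab: "length a = k" "length b = k" using av bv by (auto simp: vecs_def)
        have e: "w j ! x = (if x < j then b ! x else a ! x)" "w (Suc j) ! x = (if x < Suc j then b ! x else a ! x)"
          unfolding w_def using path_nth[OF lab, of j x] path_nth[OF lab, of "Suc j" x] Suc.prems xk by auto
        show "x \<in> {j}"
        proof (rule ccontr)
          assume "x \<notin> {j}"
          then have "x < j \<or> \<not> x < Suc j" by auto
          then show False using x e by auto
        qed
      qed
      from card_mono[OF _ this] show ?thesis unfolding hdist_def by simp
    qed
    moreover have wj: "w j \<in> vecs k" "w (Suc j) \<in> vecs k" using wv Suc.prems by auto
    ultimately have s1: "same_block Ps (w j) (w (Suc j))" using H by blast
    have s0: "same_block Ps a (w j)" using Suc.IH Suc.prems by simp
    show ?case by (rule same_block_trans[OF part s0 s1])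
  qed
  from this[of k] have "same_block Ps a b" using av bv by (simp add: w_def vecs_def)
  then obtain B where B: "B \<in> set Ps" "a \<in> B" "b \<in> B" by (auto simp: same_block_def)
  then obtain m where m: "m < length Ps" "B = Ps ! m" by (metis in_set_conv_nth)
  have dis: "\<forall>i<length Ps. \<forall>j<length Ps. i \<noteq> j \<longrightarrow> Ps ! i \<inter> Ps ! j = {}"
    using part unfolding is_partition_def by blast
  have "m = 0" using dis m a B l0 by (metis disjoint_iff)
  moreover have "m = 1" using dis m b B l1 by (metis disjoint_iff)
  ultimately show False by simp
qed

theorem theorem2:
  fixes Ps :: "('a::{finite,field}) list set list" and k t :: nat
  assumes "k > 0" and "t > 0" and "is_partition (vecs k) Ps"
  shows "(\<forall>us. distinct us \<and> set us \<subseteq> vecs k \<longrightarrow>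
            N_req TYPE('a) (length us) (req_matrix Ps t us) \<le> r_opt Ps k t)
       \<and> r_opt Ps k t \<le> N_req TYPE('a) (length Ps) (block_matrix Ps t)
       \<and> (length Ps \<ge> 2 \<longrightarrow> r_opt Ps k t \<ge> 2*t)"
proof -
  note part = assms(3)
  let ?P = "\<lambda>r. \<exists>z :: nat \<Rightarrow> 'a list. (\<forall>i<length Ps. z i \<in> vecs r)
      \<and> (\<forall>i<length Ps. \<forall>j<length Ps. i \<noteq> j \<longrightarrow> hdist (z i) (z j) \<ge> block_matrix Ps t i j)"
  have "\<exists>z :: nat \<Rightarrow> 'a list. (\<forall>i<length Ps. z i \<in> vecs (length Ps * (2*t+1)))
      \<and> (\<forall>i<length Ps. \<forall>j<length Ps. i \<noteq> j \<longrightarrow> hdist (z i) (z j) \<ge> block_matrix Ps t i j)"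
    by (rule code_exists) (auto simp: block_matrix_def)
  then have ex: "\<exists>r. ?P r" by blast
  have PN: "?P (N_req TYPE('a) (length Ps) (block_matrix Ps t))"
    unfolding N_req_def by (rule LeastI_ex[OF ex])
  then obtain z :: "nat \<Rightarrow> 'a list" where
    zl: "\<forall>i<length Ps. z i \<in> vecs (N_req TYPE('a) (length Ps) (block_matrix Ps t))"
    and zd: "\<forall>i<length Ps. \<forall>j<length Ps. i \<noteq> j \<longrightarrow> hdist (z i) (z j) \<ge> block_matrix Ps t i j"
    by blast
  have encN: "\<exists>p. is_encoding Ps k t (N_req TYPE('a) (length Ps) (block_matrix Ps t)) p"
    by (rule encoding_from_code[OF part zl zd])
  have up: "r_opt Ps k t \<le> N_req TYPE('a) (length Ps) (block_matrix Ps t)"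
    unfolding r_opt_def by (rule Least_le[where P="\<lambda>r. \<exists>p. is_encoding Ps k t r p"]) (rule encN)
  have "\<exists>p. is_encoding Ps k t (r_opt Ps k t) p"
    unfolding r_opt_def by (rule LeastI_ex) (use encN in blast)
  then obtain p where enc: "is_encoding Ps k t (r_opt Ps k t) p" by blast
  have pl: "\<And>u. u \<in> vecs k \<Longrightarrow> length (p u) = r_opt Ps k t"
    and pd: "\<And>u v. u \<in> vecs k \<Longrightarrow> v \<in> vecs k \<Longrightarrow> \<not> same_block Ps u v \<Longrightarrow>
               hdist (u @ p u) (v @ p v) \<ge> 2*t+1"
    using enc unfolding is_encoding_def by auto
  have low: "N_req TYPE('a) (length us) (req_matrix Ps t us) \<le> r_opt Ps k t"
    if "distinct us" "set us \<subseteq> vecs k" for us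
  proof -
    define y where "y i = p (us ! i)" for i
    have uv: "\<And>i. i < length us \<Longrightarrow> us ! i \<in> vecs k" using that(2) by auto
    have "(\<forall>i<length us. y i \<in> vecs (r_opt Ps k t))
      \<and> (\<forall>i<length us. \<forall>j<length us. i \<noteq> j \<longrightarrow> hdist (y i) (y j) \<ge> req_matrix Ps t us i j)"
    proof (intro conjI allI impI)
      fix i assume "i < length us" then show "y i \<in> vecs (r_opt Ps k t)"
        using uv pl by (simp add: y_def vecs_def)
    next
      fix i j assume ij: "i < length us" "j < length us" "i \<noteq> j"
      show "hdist (y i) (y j) \<ge> req_matrix Ps t us i j"
      proof (cases "same_block Ps (us ! i) (us ! j)")
        case True then show ?thesis by (simp add: req_matrix_def)
      next
        case False
        have "hdist (us ! i @ y i) (us ! j @ y j) = hdist (us ! i) (us ! j) + hdist (y i) (y j)"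
          using uv ij pl by (intro hdist_append) (auto simp: vecs_def y_def)
        moreover have "hdist (us ! i @ y i) (us ! j @ y j) \<ge> 2*t+1"
          using pd[OF uv[OF ij(1)] uv[OF ij(2)] False] by (simp add: y_def)
        ultimately show ?thesis using False by (simp add: req_matrix_def)
      qed
    qed
    then have "\<exists>z :: nat \<Rightarrow> 'a list. (\<forall>i<length us. z i \<in> vecs (r_opt Ps k t))
      \<and> (\<forall>i<length us. \<forall>j<length us. i \<noteq> j \<longrightarrow> hdist (z i) (z j) \<ge> req_matrix Ps t us i j)"
      by (intro exI[of _ y])
    then show ?thesis unfolding N_req_def by (rule Least_le)
  qed
  have two: "r_opt Ps k t \<ge> 2*t" if L: "length Ps \<ge> 2"
  proof -
    obtain u v where u: "u \<in> vecs k" and v: "v \<in> vecs k" and ns: "\<not> same_block Ps u v"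
      and h: "hdist u v \<le> 1"
      using adjacent_diff_blocks[OF part L] by blast
    have "hdist (u @ p u) (v @ p v) = hdist u v + hdist (p u) (p v)"
      using u v pl by (intro hdist_append) (auto simp: vecs_def)
    moreover have "hdist (p u) (p v) \<le> r_opt Ps k t" using hdist_le_len[of "p u" "p v"] pl[OF u] by simp
    ultimately show ?thesis using pd[OF u v ns] h by linarith
  qed
  show ?thesis using low up two by blast
qed

end
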